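(* Let $n\geqslant 3$ and fix a caterpillar species tree $S$ with $n$ leaves. Among all caterpillar gene trees $G\neq S$ on the same label set, (i) the largest number of coalescent histories for $(G,S)$ is attained when the roadblock set $B_{G,S}$ consists of the single point $(\frac n2-1,\frac n2-1)$ or $(\frac n2,\frac n2)$ if $n$ is even, or of the single point $(\frac{n-1}{2},\frac{n-1}{2})$ if $n$ is odd; and (ii) this largest number equals $C_{n-1}-C_{\lfloor (n-1)/2\rfloor}C_{\lceil (n-1)/2\rceil}$, where $C_m=\frac{1}{m+1}\binom{2m}{m}$.
   Context: All trees are binary, rooted, leaf-labeled; $G\neq S$ means different labeled topologies. A caterpillar tree with $n$ leaves is one in which some internal node is descended from all other internal nodes. Its canonical label vector $(x_1,\dots,x_n)$ has $x_1,x_2$ the labels of the two cherry leaves and, for $3\leqslant i\leqslant n$, $x_i$ the label of the leaf separated from the root by $n-i+1$ edges. Internal nodes are numbered $1,\dots,n-1$ from cherry to root; internal edge $i$ is the edge above node $i$, with an extra edge $n-1$ above the root. A coalescent history for $(G,S)$ is a map $h$ from internal nodes of $G$ to internal edges of $S$ such that (1) every label of a leaf below node $v$ of $G$ labels a leaf of $S$ below edge $h(v)$, and (2) if $v_2$ is descended from $v_1$ in $G$ then $h(v_2)$ is descended from $h(v_1)$ (objects are descended from themselves). With $\mathbf g,\mathbf s$ the canonical vectors of $G,S$, $\sigma(x)$ the index of $x$ in $\mathbf s$ and $F(j)=\max\{\sigma(g_1),\dots,\sigma(g_{j+1})\}-1$, the roadblock set is $B_{G,S}=\{(i,j)\in\mathbb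 Z^2:1\leqslant j\leqslant i\leqslant n-1,\ i<F(j)\}$. *)

theory Defs
  imports Main "HOL-Library.FuncSet"
begin

(* A caterpillar tree on n leaves is represented by its canonical label vector,
   a distinct list x = [x_1,...,x_n] (0-based: x_k is x ! (k-1)).
   Internal node i (1 <= i <= n-1) has below it exactly the leaves x_1..x_{i+1};
   internal edge i of a species tree is the edge above node i (edge n-1 above the root). *)

definition cat_below :: "'a list \<Rightarrow> nat \<Rightarrow> 'a set" where
  "cat_below x i = set (take (i + 1) x)"

(* labeled topology of a caterpillar: its set of clusters *)
definition cat_clusters :: "'a list \<Rightarrow> 'a set set" where
  "cat_clusters x = {cat_below x i | i. 1 \<le> i \<and> i \<le> length x - 1}"

(* coalescent history for (G,S): node v2 is descended from v1 iff v2 <= v1,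
   edge e2 is descended from e1 iff e2 <= e1 *)
definition is_coal_hist :: "'a list \<Rightarrow> 'a list \<Rightarrow> (nat \<Rightarrow> nat) \<Rightarrow> bool" where
  "is_coal_hist g s h \<longleftrightarrow>
     h \<in> {1..length g - 1} \<rightarrow>\<^sub>E {1..length s - 1} \<and>
     (\<forall>v \<in> {1..length g - 1}. cat_below g v \<subseteq> cat_below s (h v)) \<and>
     (\<forall>v1 \<in> {1..length g - 1}. \<forall>v2 \<in> {1..length g - 1}. v2 \<le> v1 \<longrightarrow> h v2 \<le> h v1)"

definition num_hist :: "'a list \<Rightarrow> 'a list \<Rightarrow> nat" where
  "num_hist g s = card {h. is_coal_hist g s h}"

(* sigma(x): 1-based index of x in s *)
definition sigma :: "'a list \<Rightarrow> 'a \<Rightarrow> nat" where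
  "sigma s x = (THE k. k < length s \<and> s ! k = x) + 1"

definition rbF :: "'a list \<Rightarrow> 'a list \<Rightarrow> nat \<Rightarrow> nat" where
  "rbF g s j = Max {sigma s (g ! k) | k. k \<le> j} - 1"

definition roadblock :: "'a list \<Rightarrow> 'a list \<Rightarrow> (nat \<times> nat) set" where
  "roadblock g s = {(i, j). 1 \<le> j \<and> j \<le> i \<and> i \<le> length g - 1 \<and> i < rbF g s j}"

definition catalan :: "nat \<Rightarrow> nat" where
  "catalan m = ((2 * m) choose m) div (m + 1)"

end

theory Submission
  imports Defs
begin


definition HS :: "(nat \<Rightarrow> nat) \<Rightarrow> nat \<Rightarrow> nat \<Rightarrow> (nat \<Rightarrow> nat) set" where
 "HS F m c = {h. h \<in> {1..m} \<rightarrow>\<^sub>E (UNIV::nat set) \<and> (\<forall>v\<in>{1..m}. F v \<le> h v \<and> h v \<le> c) \<and>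
     (\<forall>v1\<in>{1..m}. \<forall>v2\<in>{1..m}. v2 \<le> v1 \<longrightarrow> h v2 \<le> h v1)}"

primrec cnt :: "(nat \<Rightarrow> nat) \<Rightarrow> nat \<Rightarrow> nat \<Rightarrow> nat" where
  "cnt F 0 c = 1"
| "cnt F (Suc m) c = (\<Sum>e=F (Suc m)..c. cnt F m e)"

lemma HS_finite: "finite (HS F m c)"
proof (rule finite_subset)
  show "HS F m c \<subseteq> {1..m} \<rightarrow>\<^sub>E {0..c}" unfolding HS_def by (auto simp: PiE_iff extensional_def)
  show "finite ({1..m} \<rightarrow>\<^sub>E {0..c::nat})" by (intro finite_PiE) auto
qed

lemma HS_0: "HS F 0 c = {\<lambda>_. undefined}"
  unfolding HS_def by auto

lemma HS_Suc: "HS F (Suc m) c = (\<Union>e\<in>{F (Suc m)..c}. (\<lambda>h. h(Suc m := e)) ` HS F m e)"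
proof
  show "HS F (Suc m) c \<subseteq> (\<Union>e\<in>{F (Suc m)..c}. (\<lambda>h. h(Suc m := e)) ` HS F m e)"
  proof
    fix h assume h: "h \<in> HS F (Suc m) c"
    define e where "e = h (Suc m)"
    define h' where "h' = h(Suc m := undefined)"
    have ext: "h \<in> {1..Suc m} \<rightarrow>\<^sub>E (UNIV::nat set)" and b: "\<forall>v\<in>{1..Suc m}. F v \<le> h v \<and> h v \<le> c"
      and mo: "\<forall>v1\<in>{1..Suc m}. \<forall>v2\<in>{1..Suc m}. v2 \<le> v1 \<longrightarrow> h v2 \<le> h v1"
      using h unfolding HS_def by auto
    have "e \<in> {F (Suc m)..c}" using b unfolding e_def by auto
    moreover have "h' \<in> HS F m e"
      unfolding HS_def
    proof (intro CollectI conjI)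
      show "h' \<in> {1..m} \<rightarrow>\<^sub>E (UNIV::nat set)" using ext unfolding h'_def by (auto simp: PiE_iff extensional_def)
      show "\<forall>v\<in>{1..m}. F v \<le> h' v \<and> h' v \<le> e" using b mo unfolding h'_def e_def by auto
      show "\<forall>v1\<in>{1..m}. \<forall>v2\<in>{1..m}. v2 \<le> v1 \<longrightarrow> h' v2 \<le> h' v1" using mo unfolding h'_def by auto
    qed
    moreover have "h = h'(Suc m := e)" unfolding h'_def e_def by auto
    ultimately show "h \<in> (\<Union>e\<in>{F (Suc m)..c}. (\<lambda>h. h(Suc m := e)) ` HS F m e)" by blast
  qed
next
  show "(\<Union>e\<in>{F (Suc m)..c}. (\<lambda>h. h(Suc m := e)) ` HS F m e) \<subseteq> HS F (Suc m) c"
  proof clarify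
    fix e h assume e: "e \<in> {F (Suc m)..c}" and h: "h \<in> HS F m e"
    have ext: "h \<in> {1..m} \<rightarrow>\<^sub>E (UNIV::nat set)" and b: "\<forall>v\<in>{1..m}. F v \<le> h v \<and> h v \<le> e"
      and mo: "\<forall>v1\<in>{1..m}. \<forall>v2\<in>{1..m}. v2 \<le> v1 \<longrightarrow> h v2 \<le> h v1"
      using h unfolding HS_def by auto
    show "h(Suc m := e) \<in> HS F (Suc m) c"
      unfolding HS_def
    proof (intro CollectI conjI)
      show "h(Suc m := e) \<in> {1..Suc m} \<rightarrow>\<^sub>E (UNIV::nat set)" using ext by (auto simp: PiE_iff extensional_def)
      show "\<forall>v\<in>{1..Suc m}. F v \<le> (h(Suc m := e)) v \<and> (h(Suc m := e)) v \<le> c"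
      proof
        fix v assume v: "v \<in> {1..Suc m}"
        show "F v \<le> (h(Suc m := e)) v \<and> (h(Suc m := e)) v \<le> c"
        proof (cases "v = Suc m")
          case True then show ?thesis using e by simp
        next
          case False then have "v \<in> {1..m}" using v by auto
          then show ?thesis using b e False by fastforce
        qed
      qed
      show "\<forall>v1\<in>{1..Suc m}. \<forall>v2\<in>{1..Suc m}. v2 \<le> v1 \<longrightarrow> (h(Suc m := e)) v2 \<le> (h(Suc m := e)) v1"
        using mo b by (auto simp: le_Suc_eq)
    qed
  qed
qed

lemma card_HS: "card (HS F m c) = cnt F m c"
proof (induction m arbitrary: c)
  case 0
  then show ?case by (simp add: HS_0)
next
  case (Suc m)
  have "card (HS F (Suc m) c) = (\<Sum>e\<in>{F (Suc m)..c}. card ((\<lambda>h. h(Suc m := e)) ` HS F m e))"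
    unfolding HS_Suc
  proof (rule card_UN_disjoint)
    show "finite {F (Suc m)..c}" by simp
    show "\<forall>e\<in>{F (Suc m)..c}. finite ((\<lambda>h. h(Suc m := e)) ` HS F m e)" using HS_finite by blast
    show "\<forall>i\<in>{F (Suc m)..c}. \<forall>j\<in>{F (Suc m)..c}. i \<noteq> j \<longrightarrow>
       (\<lambda>h. h(Suc m := i)) ` HS F m i \<inter> (\<lambda>h. h(Suc m := j)) ` HS F m j = {}"
      by (auto dest!: fun_cong[where x="Suc m"])
  qed
  also have "\<dots> = (\<Sum>e\<in>{F (Suc m)..c}. card (HS F m e))"
  proof (rule sum.cong[OF refl])
    fix e
    have "inj_on (\<lambda>h. h(Suc m := e)) (HS F m e)"
    proof (rule inj_onI)
      fix x y assume x: "x \<in> HS F m e" and y: "y \<in> HS F m e" and eq: "x(Suc m := e) = y(Suc m := e)"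
      have "x (Suc m) = undefined" "y (Suc m) = undefined" using x y unfolding HS_def by (auto simp: PiE_iff extensional_def)
      then show "x = y" using eq by (metis fun_upd_triv fun_upd_upd)
    qed
    then show "card ((\<lambda>h. h(Suc m := e)) ` HS F m e) = card (HS F m e)" by (rule card_image)
  qed
  finally show ?case using Suc by simp
qed



lemma cnt_cong: "(\<forall>v\<in>{1..m}. F v = G v) \<Longrightarrow> cnt F m c = cnt G m c"
  by (induction m arbitrary: c) auto

definition Bf :: "nat \<Rightarrow> nat \<Rightarrow> int" where
  "Bf m c = int ((c + m) choose m) - (if m = 0 then 0 else int ((c + m) choose (m - 1)))"

lemma Bf_diag: "Bf (Suc m) m = 0"
proof -
  have "(Suc (2*m)) choose m = (Suc (2*m)) choose (Suc (2*m) - m)" by (rule binomial_symmetric) simp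
  then show ?thesis unfolding Bf_def by (simp add: Suc_diff_le mult_2)
qed

lemma Bf_step: "Bf (Suc m) (Suc c) = Bf (Suc m) c + Bf m (Suc c)"
proof (cases m)
  case 0
  then show ?thesis unfolding Bf_def by simp
next
  case (Suc k)
  then show ?thesis unfolding Bf_def by simp
qed

lemma cnt_id_Bf: "m \<le> Suc c \<Longrightarrow> int (cnt id m c) = Bf m c"
proof (induction m arbitrary: c)
  case 0
  then show ?case by (simp add: Bf_def)
next
  case (Suc m)
  note outer = Suc.IH
  from Suc obtain d where c: "c = m + d" using le_Suc_ex by (metis Suc_le_mono)
  have "int (cnt id (Suc m) (m + d)) = Bf (Suc m) (m + d)"
  proof (induction d)
    case 0
    then show ?case by (simp add: Bf_diag)
  next
    case (Suc d)
    have "cnt id (Suc m) (m + Suc d) = cnt id (Suc m) (m + d) + cnt id m (m + Suc d)"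
      by (simp add: atLeastAtMostSuc_conv add.commute)
    moreover have "int (cnt id m (Suc (m + d))) = Bf m (Suc (m + d))" by (rule outer) simp
    ultimately show ?case using Suc.IH
      by (simp only: Bf_step add_Suc_right of_nat_add)
  qed
  then show ?case unfolding c .
qed



lemma binom_aux: "Suc (Suc k) * ((2 * Suc k) choose k) = Suc k * ((2 * Suc k) choose Suc k)"
proof -
  have a: "Suc k * ((2 * Suc k) choose Suc k) = (2 * Suc k) * ((2 * Suc k - 1) choose k)"
    by (rule binomial_absorption)
  have b: "(2 * Suc k - k) * ((2 * Suc k) choose k) = (2 * Suc k) * ((2 * Suc k - 1) choose k)"
    by (rule binomial_absorb_comp)
  have "2 * Suc k - k = Suc (Suc k)" by simp
  with a b show ?thesis by (simp del: binomial_Suc_Suc)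
qed

lemma catalan_mul: "Suc m * cnt id m m = (2 * m) choose m"
proof (cases m)
  case 0 then show ?thesis by simp
next
  case (Suc k)
  define Z where "Z = (2*m) choose m"
  define X where "X = (2*m) choose k"
  have "int (cnt id m m) = Bf m m" by (rule cnt_id_Bf) simp
  then have e: "int (cnt id m m) = int Z - int X"
    unfolding Bf_def Z_def X_def using Suc by (simp add: mult_2 del: binomial_Suc_Suc)
  have r: "int (Suc m) * int X = int m * int Z"
    using binom_aux[of k] Suc unfolding X_def Z_def by (metis of_nat_mult)
  have "int (Suc m * cnt id m m) = int (Suc m) * int (cnt id m m)" by (simp only: of_nat_mult)
  also have "\<dots> = int (Suc m) * (int Z - int X)" using e by (simp only:)
  also have "\<dots> = int (Suc m) * int Z - int (Suc m) * int X" by (simp only: right_diff_distrib)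
  also have "\<dots> = int Z" using r by (simp add: algebra_simps del: binomial_Suc_Suc)
  finally show ?thesis unfolding Z_def by (simp only: of_nat_eq_iff)
qed

lemma catalan_cnt: "catalan m = cnt id m m"
  unfolding catalan_def catalan_mul[symmetric] by (metis Suc_eq_plus1 nonzero_mult_div_cancel_left Zero_not_Suc)

lemma catalan_mul': "Suc m * catalan m = (2 * m) choose m"
  using catalan_mul catalan_cnt by simp

lemma catalan_pos: "catalan m > 0"
proof -
  have "(2 * m) choose m > 0" by simp
  then show ?thesis using catalan_mul'[of m] by (metis mult_0_right neq0_conv)
qed

lemma catalan_ratio: "Suc (Suc k) * catalan (Suc k) = (4 * k + 2) * catalan k"
proof -
  define A where "A = (Suc (Suc (2*k))) choose Suc k"
  define Bv where "Bv = (Suc (2*k)) choose k"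
  define Cv where "Cv = (2*k) choose k"
  have a: "Suc (Suc (2*k)) * Bv = A * Suc k"
    unfolding A_def Bv_def by (rule Suc_times_binomial_eq)
  have b0: "Suc (2*k) * ((2*k) choose k) = ((Suc (2*k)) choose Suc k) * Suc k"
    by (rule Suc_times_binomial_eq)
  have sym: "(Suc (2*k)) choose Suc k = (Suc (2*k)) choose k"
    using binomial_symmetric[of k "Suc (2*k)"] by (simp add: Suc_diff_le del: binomial_Suc_Suc)
  have b: "Suc (2*k) * Cv = Bv * Suc k" using b0 sym unfolding Bv_def Cv_def by simp
  have "Suc k * (Suc k * A) = Suc k * ((4*k+2) * Cv)"
  proof -
    have "Suc k * (Suc k * A) = Suc k * (Suc (Suc (2*k)) * Bv)"
      using a by (simp only: mult.commute)
    also have "\<dots> = 2 * Suc k * (Bv * Suc k)" by (simp only: mult_ac) (simp add: algebra_simps)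
    also have "\<dots> = 2 * Suc k * (Suc (2*k) * Cv)" using b by simp
    finally show ?thesis by (simp add: algebra_simps)
  qed
  then have c: "Suc k * A = (4*k+2) * Cv" by (simp only: mult_cancel1) simp
  have d1: "Suc (Suc k) * catalan (Suc k) = A"
    using catalan_mul'[of "Suc k"] unfolding A_def by (simp del: binomial_Suc_Suc)
  have d2: "Suc k * catalan k = Cv" using catalan_mul'[of k] unfolding Cv_def by simp
  have "Suc k * (Suc (Suc k) * catalan (Suc k)) = Suc k * A" using d1 by simp
  also have "\<dots> = (4*k+2)*Cv" using c .
  also have "\<dots> = (4*k+2) * (Suc k * catalan k)" using d2 by simp
  also have "\<dots> = Suc k * ((4 * k + 2) * catalan k)" by (simp only: mult_ac)
  finally have "Suc k * (Suc (Suc k) * catalan (Suc k)) = Suc k * ((4 * k + 2) * catalan k)" .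
  then show ?thesis by (simp only: mult_cancel1) simp
qed

lemma catalan_ineq:
  assumes "j < l"
  shows "catalan (Suc j) * catalan l < catalan j * catalan (Suc l)"
proof -
  define x where "x = catalan j * catalan l"
  have x: "x > 0" unfolding x_def using catalan_pos by simp
  have "(4*j+2)*(l+2) < (j+2)*(4*l+2)" using assms by (simp add: algebra_simps)
  then have lt: "(4*j+2)*(l+2)*x < (j+2)*(4*l+2)*x" using x by simp
  have "((j+2)*(l+2)) * (catalan (Suc j) * catalan l) = (Suc (Suc j) * catalan (Suc j)) * (l+2) * catalan l"
    by (simp add: algebra_simps)
  also have "\<dots> = ((4 * j + 2) * catalan j) * (l+2) * catalan l" by (simp only: catalan_ratio)
  also have "\<dots> = (4*j+2)*(l+2)*x" unfolding x_def by (simp add: algebra_simps)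
  finally have e1: "((j+2)*(l+2)) * (catalan (Suc j) * catalan l) = (4*j+2)*(l+2)*x" .
  have "((j+2)*(l+2)) * (catalan j * catalan (Suc l)) = (Suc (Suc l) * catalan (Suc l)) * (j+2) * catalan j"
    by (simp add: algebra_simps)
  also have "\<dots> = ((4 * l + 2) * catalan l) * (j+2) * catalan j" by (simp only: catalan_ratio)
  also have "\<dots> = (j+2)*(4*l+2)*x" unfolding x_def by (simp add: algebra_simps)
  finally have e2: "((j+2)*(l+2)) * (catalan j * catalan (Suc l)) = (j+2)*(4*l+2)*x" .
  note e1 moreover note e2
  ultimately have "((j+2)*(l+2)) * (catalan (Suc j) * catalan l) < ((j+2)*(l+2)) * (catalan j * catalan (Suc l))"
    using lt by simp
  then show ?thesis by (rule mult_less_cancel1[THEN iffD1, THEN conjunct2])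
qed



definition Pp :: "nat \<Rightarrow> nat \<Rightarrow> nat" where
  "Pp m k = catalan k * catalan (m - k)"

lemma Pp_step: "Suc (2*k) < m \<Longrightarrow> Pp m (Suc k) < Pp m k"
proof -
  assume a: "Suc (2*k) < m"
  have "catalan (Suc k) * catalan (m - Suc k) < catalan k * catalan (Suc (m - Suc k))"
    by (rule catalan_ineq) (use a in simp)
  moreover have "Suc (m - Suc k) = m - k" using a by simp
  ultimately show ?thesis unfolding Pp_def by simp
qed

lemma Pp_left_strict: "k + Suc d = m div 2 \<Longrightarrow> Pp m (m div 2) < Pp m k"
proof (induction d arbitrary: k)
  case 0
  then show ?case using Pp_step[of k m] by simp
next
  case (Suc d)
  have "Pp m (m div 2) < Pp m (Suc k)" using Suc.IH[of "Suc k"] Suc.prems by simp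
  also have "\<dots> < Pp m k" using Suc.prems by (intro Pp_step) simp
  finally show ?case .
qed

lemma Pp_left: "k \<le> m div 2 \<Longrightarrow> Pp m (m div 2) \<le> Pp m k \<and> (Pp m k = Pp m (m div 2) \<longrightarrow> k = m div 2)"
proof (cases "k = m div 2")
  case False
  assume "k \<le> m div 2"
  then obtain d where "k + Suc d = m div 2" using False by (metis add_Suc_right le_add_diff_inverse less_imp_Suc_add le_neq_implies_less)
  then show ?thesis using Pp_left_strict by fastforce
qed simp

lemma Pp_sym: "k \<le> m \<Longrightarrow> Pp m (m - k) = Pp m k"
  unfolding Pp_def by simp

lemma Pp_min: "k \<le> m \<Longrightarrow> Pp m (m div 2) \<le> Pp m k \<and> (Pp m k = Pp m (m div 2) \<longrightarrow> k = m div 2 \<or> k = m - m div 2)"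
proof (cases "k \<le> m div 2")
  case True
  assume "k \<le> m"
  then show ?thesis using Pp_left[OF True] by blast
next
  case False
  assume km: "k \<le> m"
  have "m - k \<le> m div 2" using False by simp
  from Pp_left[OF this] have "Pp m (m div 2) \<le> Pp m (m - k) \<and> (Pp m (m - k) = Pp m (m div 2) \<longrightarrow> m - k = m div 2)" .
  then show ?thesis using Pp_sym[OF km] km by auto
qed

definition Fk :: "nat \<Rightarrow> nat \<Rightarrow> nat" where
  "Fk k v = (if v = k then Suc k else v)"

lemma decomp_gen:
  assumes "1 \<le> k"
  shows "cnt id (k+j) (k+d) = cnt (Fk k) (k+j) (k+d) + cnt id k k * cnt id j d"
proof (induction j arbitrary: d)
  case 0
  obtain k' where k: "k = Suc k'" using assms by (cases k) auto
  have eq: "cnt (Fk k) k' e = cnt id k' e" for e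
    by (rule cnt_cong) (auto simp: Fk_def k)
  have "cnt id k (k+d) = (\<Sum>e=k..k+d. cnt id k' e)" by (simp add: k)
  also have "\<dots> = cnt id k' k + (\<Sum>e=Suc k..k+d. cnt id k' e)"
    by (simp add: sum.atLeast_Suc_atMost)
  also have "(\<Sum>e=Suc k..k+d. cnt id k' e) = cnt (Fk k) k (k+d)"
  proof -
    have "cnt (Fk k) k (k+d) = (\<Sum>e=Fk k k..k+d. cnt (Fk k) k' e)" by (simp only: k cnt.simps)
    also have "\<dots> = (\<Sum>e=Suc k..k+d. cnt id k' e)" by (simp only: eq) (simp add: Fk_def)
    finally show ?thesis by simp
  qed
  also have "cnt id k' k = cnt id k k" by (simp add: k)
  finally show ?case by (simp add: id_def)
next
  case (Suc j)
  have f: "Fk k (Suc (k + j)) = Suc (k+j)" by (simp add: Fk_def)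
  have "cnt id (k + Suc j) (k + d) = (\<Sum>e=Suc (k+j)..k+d. cnt id (k+j) e)" by simp
  also have "\<dots> = (\<Sum>e=Suc j..d. cnt id (k+j) (e + k))"
    using sum.shift_bounds_cl_nat_ivl[of "\<lambda>e. cnt id (k+j) e" "Suc j" k d] by (simp add: add.commute)
  also have "\<dots> = (\<Sum>e=Suc j..d. cnt (Fk k) (k+j) (k + e) + cnt id k k * cnt id j e)"
    using Suc.IH by (simp add: add.commute id_def)
  also have "\<dots> = (\<Sum>e=Suc j..d. cnt (Fk k) (k+j) (k + e)) + cnt id k k * cnt id (Suc j) d"
    by (simp add: sum.distrib sum_distrib_left)
  also have "(\<Sum>e=Suc j..d. cnt (Fk k) (k+j) (k + e)) = cnt (Fk k) (k + Suc j) (k + d)"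
    using sum.shift_bounds_cl_nat_ivl[of "\<lambda>e. cnt (Fk k) (k+j) e" "Suc j" k d] f by (simp add: add.commute)
  finally show ?case .
qed

lemma decomp:
  assumes "1 \<le> k" "k \<le> m"
  shows "cnt (Fk k) m m = catalan m - Pp m k"
proof -
  have "cnt id (k+(m-k)) (k+(m-k)) = cnt (Fk k) (k+(m-k)) (k+(m-k)) + cnt id k k * cnt id (m-k) (m-k)"
    by (rule decomp_gen) (rule assms)
  then show ?thesis using assms unfolding Pp_def catalan_cnt by simp
qed



lemma sigma_nth: "distinct s \<Longrightarrow> i < length s \<Longrightarrow> sigma s (s!i) = Suc i"
  unfolding sigma_def
  by (subst the_equality[of _ i]) (auto simp: nth_eq_iff_index_eq)

lemma in_take_iff:
  assumes "distinct s" "x \<in> set s"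
  shows "x \<in> set (take (Suc e) s) \<longleftrightarrow> sigma s x \<le> Suc e"
proof -
  obtain i where i: "i < length s" "s!i = x" using assms(2) by (auto simp: in_set_conv_nth)
  have "x \<in> set (take (Suc e) s) \<longleftrightarrow> (\<exists>j < min (Suc e) (length s). s!j = x)"
    by (auto simp: in_set_conv_nth)
  also have "\<dots> \<longleftrightarrow> i < Suc e"
    using i assms(1) by (auto simp: nth_eq_iff_index_eq)
  finally show ?thesis using sigma_nth[OF assms(1) i(1)] i(2) by (simp add: less_Suc_eq_le)
qed

lemma set_take_nth: "v < length xs \<Longrightarrow> set (take (Suc v) xs) = (\<lambda>k. xs!k) ` {..v}"
proof (rule set_eqI)
  fix x assume v: "v < length xs"
  show "x \<in> set (take (Suc v) xs) \<longleftrightarrow> x \<in> (\<lambda>k. xs!k) ` {..v}"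
  proof
    assume "x \<in> set (take (Suc v) xs)"
    then obtain j where "j < length (take (Suc v) xs)" "take (Suc v) xs ! j = x" by (auto simp: in_set_conv_nth)
    then show "x \<in> (\<lambda>k. xs!k) ` {..v}" by auto
  next
    assume "x \<in> (\<lambda>k. xs!k) ` {..v}"
    then obtain j where j: "j \<le> v" "x = xs!j" by auto
    then have "take (Suc v) xs ! j = x" "j < length (take (Suc v) xs)" using v by auto
    then show "x \<in> set (take (Suc v) xs)" by (metis nth_mem)
  qed
qed

lemma char:
  assumes "length g = length s" "distinct s" "set g = set s" "v < length g"
  shows "set (take (Suc v) g) \<subseteq> set (take (Suc e) s) \<longleftrightarrow> rbF g s v \<le> e"
proof -
  have S: "{sigma s (g ! k) |k. k \<le> v} = (\<lambda>k. sigma s (g!k)) ` {..v}" by auto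
  have "rbF g s v \<le> e \<longleftrightarrow> Max ((\<lambda>k. sigma s (g!k)) ` {..v}) \<le> Suc e"
    unfolding rbF_def S by arith
  also have "\<dots> \<longleftrightarrow> (\<forall>k\<le>v. sigma s (g!k) \<le> Suc e)" by (auto simp: Max_le_iff)
  also have "\<dots> \<longleftrightarrow> (\<forall>k\<le>v. g!k \<in> set (take (Suc e) s))"
  proof -
    have "g!k \<in> set s" if "k \<le> v" for k using that assms(3,4) by (metis nth_mem order_le_less_trans)
    then show ?thesis using in_take_iff[OF assms(2)] by blast
  qed
  also have "\<dots> \<longleftrightarrow> set (take (Suc v) g) \<subseteq> set (take (Suc e) s)"
    unfolding set_take_nth[OF assms(4)] by auto
  finally show ?thesis by simp
qed

lemma rbF_bounds:
  assumes "length g = length s" "distinct s" "set g = set s" "distinct g" "v < length g"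
  shows "v \<le> rbF g s v \<and> rbF g s v \<le> length s - 1"
proof
  have "set (take (Suc v) g) \<subseteq> set (take (Suc (length s - 1)) s)"
    using assms by (metis Suc_diff_1 gr_implies_not0 linorder_neqE_nat not_less0 set_take_subset take_all_iff order_refl)
  then show "rbF g s v \<le> length s - 1" using char[OF assms(1-3,5)] by blast
  have "set (take (Suc v) g) \<subseteq> set (take (Suc (rbF g s v)) s)" using char[OF assms(1-3,5)] by blast
  then have "card (set (take (Suc v) g)) \<le> card (set (take (Suc (rbF g s v)) s))" by (intro card_mono) auto
  also have "\<dots> \<le> length (take (Suc (rbF g s v)) s)" by (rule card_length)
  also have "\<dots> \<le> Suc (rbF g s v)" by simp
  finally show "v \<le> rbF g s v" using assms(4,5) by (simp add: distinct_card)
qed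

lemma coal_iff:
  assumes "length g = length s" "distinct s" "set g = set s" "distinct g"
  shows "is_coal_hist g s h \<longleftrightarrow> h \<in> HS (rbF g s) (length s - 1) (length s - 1)"
proof -
  let ?m = "length s - 1"
  have c: "cat_below g v \<subseteq> cat_below s e \<longleftrightarrow> rbF g s v \<le> e" if "v \<in> {1..?m}" for v e
  proof -
    have vl: "v < length g" using that assms(1) by auto
    show ?thesis unfolding cat_below_def using char[OF assms(1-3) vl] by simp
  qed
  have b: "1 \<le> rbF g s v" if "v \<in> {1..?m}" for v
  proof -
    have vl: "v < length g" using that assms(1) by auto
    show ?thesis using rbF_bounds[OF assms vl] that by auto
  qed
  have c2: "(\<forall>v\<in>{1..?m}. cat_below g v \<subseteq> cat_below s (h v)) \<longleftrightarrow> (\<forall>v\<in>{1..?m}. rbF g s v \<le> h v)"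
    using c by blast
  have p: "h \<in> {1..?m} \<rightarrow>\<^sub>E {1..?m} \<longleftrightarrow> h \<in> {1..?m} \<rightarrow>\<^sub>E (UNIV::nat set) \<and> (\<forall>v\<in>{1..?m}. 1 \<le> h v \<and> h v \<le> ?m)"
    by (auto simp: PiE_iff)
  have "(\<forall>v\<in>{1..?m}. rbF g s v \<le> h v) \<Longrightarrow> (\<forall>v\<in>{1..?m}. 1 \<le> h v)"
    using b order_trans by blast
  then show ?thesis
    unfolding is_coal_hist_def HS_def assms(1) c2 p by blast
qed

lemma clusters_ne:
  assumes "length g = length s" "distinct s" "set g = set s" "distinct g"
    and "cat_clusters g \<noteq> cat_clusters s"
  shows "\<exists>k\<in>{1..length s - 1}. rbF g s k \<noteq> k"
proof (rule ccontr)
  assume "\<not> ?thesis"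
  then have F: "\<forall>k\<in>{1..length s - 1}. rbF g s k = k" by blast
  have "cat_below g v = cat_below s v" if v: "v \<in> {1..length s - 1}" for v
  proof -
    have vl: "v < length g" using v assms(1) by auto
    have sub: "set (take (Suc v) g) \<subseteq> set (take (Suc v) s)" using char[OF assms(1-3) vl] F v by simp
    have "card (set (take (Suc v) g)) = Suc v" using assms(4) vl by (simp add: distinct_card)
    moreover have "card (set (take (Suc v) s)) = Suc v" using assms(1,2) vl by (simp add: distinct_card)
    ultimately have "set (take (Suc v) g) = set (take (Suc v) s)"
      using sub by (intro card_subset_eq) auto
    then show ?thesis unfolding cat_below_def by simp
  qed
  then have "cat_clusters g = cat_clusters s" unfolding cat_clusters_def assms(1) by force
  with assms(5) show False by simp
qed

lemma rb_char:
  assumes bnd: "\<forall>v\<in>{1..m}. v \<le> F v \<and> F v \<le> m" and k: "1 \<le> k" "k < m"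
  shows "{(i, j). 1 \<le> j \<and> j \<le> i \<and> i \<le> m \<and> i < F j} = {(k,k)} \<longleftrightarrow> (\<forall>v\<in>{1..m}. F v = Fk k v)"
proof
  assume eq: "{(i, j). 1 \<le> j \<and> j \<le> i \<and> i \<le> m \<and> i < F j} = {(k,k)}"
  have mem: "1 \<le> j \<and> j \<le> i \<and> i \<le> m \<and> i < F j \<longleftrightarrow> (i,j) = (k,k)" for i j
    using eq by (metis (no_types, lifting) case_prodD case_prodI mem_Collect_eq singletonD singletonI)
  show "\<forall>v\<in>{1..m}. F v = Fk k v"
  proof
    fix v assume v: "v \<in> {1..m}"
    show "F v = Fk k v"
    proof (cases "v = k")
      case True
      have "k < F k" using mem[of k k] by simp
      moreover have "\<not> (1 \<le> k \<and> k \<le> Suc k \<and> Suc k \<le> m \<and> Suc k < F k)" using mem[of k "Suc k"] by (metis Pair_inject n_not_Suc_n)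
      then have "\<not> Suc k < F k" using k by auto
      ultimately show ?thesis using True by (simp add: Fk_def)
    next
      case False
      then have "\<not> v < F v" using mem[of v v] v by auto
      moreover have "v \<le> F v" using bnd v by blast
      ultimately show ?thesis using False by (simp add: Fk_def)
    qed
  qed
next
  assume F: "\<forall>v\<in>{1..m}. F v = Fk k v"
  show "{(i, j). 1 \<le> j \<and> j \<le> i \<and> i \<le> m \<and> i < F j} = {(k,k)}"
  proof (rule set_eqI, clarify)
    fix i j
    show "((i, j) \<in> {(i, j). 1 \<le> j \<and> j \<le> i \<and> i \<le> m \<and> i < F j}) = ((i, j) \<in> {(k, k)})"
    proof (cases "1 \<le> j \<and> j \<le> m")
      case True
      then show ?thesis using F k by (auto simp: Fk_def)
    next
      case False
      then show ?thesis using k by auto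
    qed
  qed
qed



lemma HS_cong: "(\<forall>v\<in>{1..m}. F v = G v) \<Longrightarrow> HS F m c = HS G m c"
  unfolding HS_def by auto

lemma HS_mono: "(\<forall>v\<in>{1..m}. G v \<le> F v) \<Longrightarrow> HS F m c \<subseteq> HS G m c"
  unfolding HS_def by (auto intro: order_trans)

lemma p_in:
  assumes "1 \<le> k" "k < m"
  shows "restrict (Fk k) {1..m} \<in> HS (Fk k) m m"
  unfolding HS_def using assms by (auto simp: Fk_def)

lemma p_in_imp:
  assumes "restrict (Fk k) {1..m} \<in> HS F m m"
  shows "\<forall>v\<in>{1..m}. F v \<le> Fk k v"
  using assms unfolding HS_def by auto

lemma decomp':
  assumes "1 \<le> k" "k \<le> m"
  shows "cnt (Fk k) m m + Pp m k = catalan m"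
proof -
  have "cnt id (k+(m-k)) (k+(m-k)) = cnt (Fk k) (k+(m-k)) (k+(m-k)) + cnt id k k * cnt id (m-k) (m-k)"
    by (rule decomp_gen) (rule assms)
  then show ?thesis using assms unfolding Pp_def catalan_cnt by simp
qed

lemma nth_in_take: "j < length s \<Longrightarrow> j \<le> e \<Longrightarrow> s!j \<in> set (take (Suc e) s)"
  by (metis (no_types, lifting) in_set_conv_nth length_take less_Suc_eq_le min_less_iff_conj nth_take)

lemma g0_props:
  assumes ds: "distinct s" and ln: "length s = n" and a: "1 \<le> a" "Suc a < n"
  defines "g0 \<equiv> s[a := s!Suc a, Suc a := s!a]"
  shows "length g0 = n \<and> distinct g0 \<and> set g0 = set s \<and> (\<forall>v\<in>{1..n-1}. rbF g0 s v = Fk a v)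
         \<and> cat_clusters g0 \<noteq> cat_clusters s"
proof -
  have l: "length g0 = n" unfolding g0_def using ln by simp
  have d: "distinct g0" unfolding g0_def using ds a ln by simp
  have st: "set g0 = set s" unfolding g0_def using a ln by (simp add: set_swap)
  have nth: "g0!i = (if i = Suc a then s!a else if i = a then s!Suc a else s!i)" if "i < n" for i
    unfolding g0_def using that a ln by (auto simp: nth_list_update)
  have lg: "length g0 = length s" using l ln by simp
  have F: "rbF g0 s v = Fk a v" if v: "v \<in> {1..n-1}" for v
  proof -
    have vl: "v < length g0" using v l a by auto
    have "set (take (Suc v) g0) \<subseteq> set (take (Suc (Fk a v)) s)"
    proof
      fix x assume "x \<in> set (take (Suc v) g0)"
      then obtain i where i: "i \<le> v" "x = g0!i" unfolding set_take_nth[OF vl] by auto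
      have iv: "i < n" using i vl l by auto
      show "x \<in> set (take (Suc (Fk a v)) s)"
      proof (cases "i = Suc a")
        case True
        then show ?thesis using i nth[OF iv] iv a ln by (auto intro!: nth_in_take simp: Fk_def)
      next
        case False
        show ?thesis
        proof (cases "i = a")
          case True
          then have "Suc a \<le> Fk a v" using i by (auto simp: Fk_def)
          then show ?thesis using True i nth[OF iv] a ln False by (auto intro!: nth_in_take)
        next
          case False2: False
          then have "i \<le> Fk a v" using i by (auto simp: Fk_def)
          then show ?thesis using i nth[OF iv] iv ln False False2 by (auto intro!: nth_in_take)
        qed
      qed
    qed
    then have le: "rbF g0 s v \<le> Fk a v" using char[OF lg ds st vl] by blast
    have ge: "Fk a v \<le> rbF g0 s v"
    proof (cases "v = a")
      case True
      show ?thesis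
      proof (rule ccontr)
        assume "\<not> ?thesis"
        then have "rbF g0 s a \<le> a" using True by (simp add: Fk_def)
        then have sub: "set (take (Suc a) g0) \<subseteq> set (take (Suc a) s)" using char[OF lg ds st, of a] vl True by blast
        have "g0!a \<in> set (take (Suc a) g0)" using vl True by (intro nth_in_take) auto
        then have "s!Suc a \<in> set (take (Suc a) s)" using sub nth[of a] a by auto
        moreover have "s!Suc a \<in> set s" using a ln by simp
        ultimately have "sigma s (s!Suc a) \<le> Suc a" using in_take_iff[OF ds] by blast
        then show False using sigma_nth[OF ds, of "Suc a"] a ln by simp
      qed
    next
      case False
      then show ?thesis using rbF_bounds[OF lg ds st d vl] by (simp add: Fk_def)
    qed
    show ?thesis using le ge by simp
  qed
  have cl: "cat_clusters g0 \<noteq> cat_clusters s"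
  proof
    assume eq: "cat_clusters g0 = cat_clusters s"
    have "cat_below g0 a \<in> cat_clusters g0" unfolding cat_clusters_def using a l by auto
    then have "cat_below g0 a \<in> cat_clusters s" using eq by simp
    then obtain i where i: "1 \<le> i" "i \<le> n - 1" "cat_below g0 a = cat_below s i"
      unfolding cat_clusters_def ln by auto
    have "card (cat_below g0 a) = Suc a" unfolding cat_below_def using d l a by (simp add: distinct_card)
    moreover have "card (cat_below s i) = Suc i" unfolding cat_below_def using ds ln i by (simp add: distinct_card)
    ultimately have "i = a" using i by simp
    then have "set (take (Suc a) g0) \<subseteq> set (take (Suc a) s)" using i unfolding cat_below_def by simp
    then have "rbF g0 s a \<le> a" using char[OF lg ds st, of a] l a by simp
    moreover have "rbF g0 s a = Suc a" using F[of a] a by (simp add: Fk_def)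
    ultimately show False by simp
  qed
  show ?thesis using l d st F cl by blast
qed



lemma num_hist_HS:
  assumes "length g = length s" "distinct s" "set g = set s" "distinct g"
  shows "num_hist g s = cnt (rbF g s) (length s - 1) (length s - 1)"
proof -
  have "{h. is_coal_hist g s h} = HS (rbF g s) (length s - 1) (length s - 1)"
    using coal_iff[OF assms] by blast
  then show ?thesis unfolding num_hist_def by (simp add: card_HS)
qed

theorem corollary2:
  fixes s :: "'a list" and n :: nat
  assumes "n \<ge> 3" and "length s = n" and "distinct s"
  defines "Gs \<equiv> {g. length g = n \<and> distinct g \<and> set g = set s \<and> cat_clusters g \<noteq> cat_clusters s}"
  shows "Max ((\<lambda>g. num_hist g s) ` Gs) =
           catalan (n - 1) - catalan ((n - 1) div 2) * catalan (n div 2) \<and>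
         (\<forall>g \<in> Gs. num_hist g s = Max ((\<lambda>g. num_hist g s) ` Gs) \<longleftrightarrow>
           roadblock g s \<in> (if even n then {{(n div 2 - 1, n div 2 - 1)}, {(n div 2, n div 2)}}
                             else {{((n - 1) div 2, (n - 1) div 2)}}))"
proof -
  define m where "m = n - 1"
  define a where "a = m div 2"
  define V where "V = catalan m - Pp m a"
  have ma: "m - a = n div 2" unfolding m_def a_def using assms(1) by simp
  have Veq: "V = catalan (n - 1) - catalan ((n - 1) div 2) * catalan (n div 2)"
    unfolding V_def Pp_def ma[symmetric] a_def m_def by simp
  have a1: "1 \<le> a" "a < m" unfolding a_def m_def using assms(1) by auto
  have sl: "length s = Suc m" unfolding m_def using assms(1,2) by simp
  have PpC: "Pp m k \<le> catalan m" if "1 \<le> k" "k \<le> m" for k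
    using decomp'[OF that] by simp
  have val: "num_hist g s = catalan m - Pp m k"
    if g: "g \<in> Gs" and k: "1 \<le> k" "k < m" and F: "\<forall>v\<in>{1..m}. rbF g s v = Fk k v" for g k
  proof -
    have gg: "length g = length s" "set g = set s" "distinct g" using g assms(2) unfolding Gs_def by auto
    have "num_hist g s = cnt (rbF g s) m m" using num_hist_HS[OF gg(1) assms(3) gg(2,3)] sl by simp
    also have "\<dots> = cnt (Fk k) m m" using F by (intro cnt_cong) auto
    also have "\<dots> = catalan m - Pp m k" using decomp'[of k m] k by simp
    finally show ?thesis .
  qed
  have main: "num_hist g s \<le> V \<and> (num_hist g s = V \<longrightarrow> (\<exists>k. (k = a \<or> k = m - a) \<and> (\<forall>v\<in>{1..m}. rbF g s v = Fk k v)))"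
    if g: "g \<in> Gs" for g
  proof -
    have gg: "length g = length s" "set g = set s" "distinct g" "cat_clusters g \<noteq> cat_clusters s"
      using g assms(2) unfolding Gs_def by auto
    define F where "F = rbF g s"
    have bnd: "\<forall>v\<in>{1..m}. v \<le> F v \<and> F v \<le> m"
    proof
      fix v assume v: "v \<in> {1..m}"
      then have "v < length g" using gg(1) sl by auto
      then show "v \<le> F v \<and> F v \<le> m" using rbF_bounds[OF gg(1) assms(3) gg(2,3)] sl unfolding F_def by simp
    qed
    obtain k where k: "k \<in> {1..m}" "F k \<noteq> k"
      using clusters_ne[OF gg(1) assms(3) gg(2,3,4)] sl unfolding F_def by auto
    have km: "k < m" using k bnd by (metis atLeastAtMost_iff le_antisym le_neq_implies_less)
    have kF: "Suc k \<le> F k" using k bnd by (metis Suc_leI le_neq_implies_less)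
    have le: "\<forall>v\<in>{1..m}. Fk k v \<le> F v" using bnd kF by (auto simp: Fk_def)
    have sub: "HS F m m \<subseteq> HS (Fk k) m m" by (rule HS_mono[OF le])
    have nh: "num_hist g s = card (HS F m m)"
      using num_hist_HS[OF gg(1) assms(3) gg(2,3)] sl unfolding F_def by (simp add: card_HS)
    have cF: "card (HS (Fk k) m m) = catalan m - Pp m k"
      using decomp'[of k m] k km by (simp add: card_HS)
    have c1: "card (HS F m m) \<le> card (HS (Fk k) m m)" by (rule card_mono[OF HS_finite sub])
    have pmin: "Pp m a \<le> Pp m k \<and> (Pp m k = Pp m a \<longrightarrow> k = a \<or> k = m - a)"
      using Pp_min[of k m] k unfolding a_def by auto
    have pk: "Pp m k \<le> catalan m" using PpC[of k] k by auto
    have pa: "Pp m a \<le> catalan m" using PpC[of a] a1 by auto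
    have c2: "catalan m - Pp m k \<le> V" unfolding V_def using pmin by (simp add: diff_le_mono2)
    show ?thesis
    proof
      show "num_hist g s \<le> V" using nh c1 cF c2 by simp
      show "num_hist g s = V \<longrightarrow> (\<exists>k. (k = a \<or> k = m - a) \<and> (\<forall>v\<in>{1..m}. rbF g s v = Fk k v))"
      proof
        assume eqV: "num_hist g s = V"
        then have e1: "card (HS F m m) = card (HS (Fk k) m m)" and e2: "catalan m - Pp m k = V"
          using nh c1 cF c2 by simp_all
        have "Pp m k = Pp m a" using e2 pk pa pmin unfolding V_def by linarith
        then have ka: "k = a \<or> k = m - a" using pmin by blast
        have "HS F m m = HS (Fk k) m m" by (rule card_subset_eq[OF HS_finite sub e1])
        then have "restrict (Fk k) {1..m} \<in> HS F m m" using p_in[of k m] k km by simp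
        then have "\<forall>v\<in>{1..m}. F v \<le> Fk k v" by (rule p_in_imp)
        then have "\<forall>v\<in>{1..m}. F v = Fk k v" using le by (meson le_antisym)
        then show "\<exists>k. (k = a \<or> k = m - a) \<and> (\<forall>v\<in>{1..m}. rbF g s v = Fk k v)"
          using ka unfolding F_def by blast
      qed
    qed
  qed
  define g0 where "g0 = s[a := s!Suc a, Suc a := s!a]"
  have g0p: "length g0 = n \<and> distinct g0 \<and> set g0 = set s \<and> (\<forall>v\<in>{1..n-1}. rbF g0 s v = Fk a v)
         \<and> cat_clusters g0 \<noteq> cat_clusters s"
    unfolding g0_def by (rule g0_props[OF assms(3,2)]) (use a1 m_def in auto)
  have g0G: "g0 \<in> Gs" using g0p unfolding Gs_def by blast
  have g0V: "num_hist g0 s = V"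
    using val[OF g0G a1] g0p unfolding V_def m_def by simp
  have fin: "finite Gs"
  proof (rule finite_subset)
    show "Gs \<subseteq> {xs. set xs \<subseteq> set s \<and> length xs = n}" unfolding Gs_def by auto
    show "finite {xs. set xs \<subseteq> set s \<and> length xs = n}" by (rule finite_lists_length_eq) simp
  qed
  have MaxV: "Max ((\<lambda>g. num_hist g s) ` Gs) = V"
  proof (rule Max_eqI)
    show "finite ((\<lambda>g. num_hist g s) ` Gs)" using fin by simp
    show "y \<le> V" if "y \<in> (\<lambda>g. num_hist g s) ` Gs" for y using that main by auto
    show "V \<in> (\<lambda>g. num_hist g s) ` Gs" using g0G g0V by force
  qed
  define T where "T = (if even n then {{(n div 2 - 1, n div 2 - 1)}, {(n div 2, n div 2)}}
                             else {{((n - 1) div 2, (n - 1) div 2)}})"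
  have T: "T = {{(a, a)}, {(m - a, m - a)}}"
    unfolding T_def a_def m_def using assms(1) by (auto elim!: evenE oddE)
  have rbeq: "roadblock g s = {(i, j). 1 \<le> j \<and> j \<le> i \<and> i \<le> m \<and> i < rbF g s j}" if "g \<in> Gs" for g
    using that unfolding roadblock_def Gs_def m_def by simp
  have a2: "1 \<le> m - a" "m - a < m" using a1 unfolding a_def by auto
  have iff: "num_hist g s = V \<longleftrightarrow> roadblock g s \<in> T" if g: "g \<in> Gs" for g
  proof -
    have gg: "length g = length s" "set g = set s" "distinct g"
      using g assms(2) unfolding Gs_def by auto
    have bnd: "\<forall>v\<in>{1..m}. v \<le> rbF g s v \<and> rbF g s v \<le> m"
    proof
      fix v assume v: "v \<in> {1..m}"
      then have "v < length g" using gg(1) sl by auto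
      then show "v \<le> rbF g s v \<and> rbF g s v \<le> m" using rbF_bounds[OF gg(1) assms(3) gg(2,3)] sl by simp
    qed
    have rc: "roadblock g s = {(k,k)} \<longleftrightarrow> (\<forall>v\<in>{1..m}. rbF g s v = Fk k v)" if "1 \<le> k" "k < m" for k
      unfolding rbeq[OF g] by (rule rb_char[OF bnd that])
    show ?thesis
    proof
      assume "num_hist g s = V"
      then obtain k where "k = a \<or> k = m - a" "\<forall>v\<in>{1..m}. rbF g s v = Fk k v" using main[OF g] by blast
      then show "roadblock g s \<in> T" unfolding T using rc a1 a2 by auto
    next
      assume "roadblock g s \<in> T"
      then obtain k where k: "k = a \<or> k = m - a" "roadblock g s = {(k,k)}" unfolding T by auto
      have k1: "1 \<le> k" "k < m" using k(1) a1 a2 by auto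
      have "num_hist g s = catalan m - Pp m k" using val[OF g k1] rc[OF k1] k(2) by blast
      moreover have "Pp m k = Pp m a" using k(1) Pp_sym[of a m] a1 by auto
      ultimately show "num_hist g s = V" unfolding V_def by simp
    qed
  qed
  show ?thesis
    unfolding MaxV T_def[symmetric] using Veq iff by simp
qed


end
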